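(* Let $s>0$. For all $\tau>0$, $$2\pi\Big(1+\frac{4s^2}{\tau^2}\Big)^{1/2}\le\sup_{\xi\in\mathbb R^3}\mu_s*\mu_s(\xi,\tau)\le2\pi\Big(1+\frac{2s}{\tau}\Big).$$ In particular $\lim_{\tau\to\infty}\sup_{\xi\in\mathbb R^3}\mu_s*\mu_s(\xi,\tau)=2\pi$.
   Context: For $s>0$, $\mu_s$ is the measure on $\mathbb R^4$ with $\int g\,d\mu_s=\int_{|y|>s}g(y,\sqrt{|y|^2-s^2})\frac{dy}{\sqrt{|y|^2-s^2}}$, and $\mu_s*\mu_s$ is its self-convolution, identified with its (Lebesgue) density on $\mathbb R^4$, which for $\tau\ge0$ is given by the explicit formula $\mu_s*\mu_s(\xi,\tau)=\frac{2\pi}{|\xi|}\big(|\xi|(1+\frac{4s^2}{\tau^2-|\xi|^2})^{1/2}\mathbb 1_{\{|\xi|<\sqrt{\tau^2+s^2}-s\}}+\tau\mathbb 1_{\{\sqrt{\tau^2+s^2}-s\le|\xi|\le\sqrt{\tau^2+4s^2}\}}+(\tau-|\xi|(1+\frac{4s^2}{\tau^2-|\xi|^2})^{1/2})\mathbb 1_{\{\sqrt{\tau^2+4s^2}<|\xi|\le\sqrt{\tau^2+s^2}+s\}}\big)$, with value $2\pi(1+4s^2/\tau^2)^{1/2}$ at $\xi=0$. *)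

theory Defs
  imports "HOL-Analysis.Analysis"
begin

text \<open>The density of the self-convolution \<mu>_s * \<mu>_s on R^4 = R^3 x R, at points
  (xi, tau) with tau \<ge> 0, given by the explicit formula of the paper
  (the paper identifies the measure \<mu>_s * \<mu>_s with this density).\<close>
definition mu_conv :: "real \<Rightarrow> real^3 \<Rightarrow> real \<Rightarrow> real" where
  "mu_conv s \<xi> \<tau> =
    (if \<xi> = 0 then 2 * pi * sqrt (1 + 4 * s\<^sup>2 / \<tau>\<^sup>2)
     else (2 * pi / norm \<xi>) *
       ((if norm \<xi> < sqrt (\<tau>\<^sup>2 + s\<^sup>2) - s
         then norm \<xi> * sqrt (1 + 4 * s\<^sup>2 / (\<tau>\<^sup>2 - (norm \<xi>)\<^sup>2)) else 0)
      + (if sqrt (\<tau>\<^sup>2 + s\<^sup>2) - s \<le> norm \<xi> \<and> norm \<xi> \<le> sqrt (\<tau>\<^sup>2 + 4 * s\<^sup>2)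
         then \<tau> else 0)
      + (if sqrt (\<tau>\<^sup>2 + 4 * s\<^sup>2) < norm \<xi> \<and> norm \<xi> \<le> sqrt (\<tau>\<^sup>2 + s\<^sup>2) + s
         then \<tau> - norm \<xi> * sqrt (1 + 4 * s\<^sup>2 / (\<tau>\<^sup>2 - (norm \<xi>)\<^sup>2)) else 0)))"

end

theory Submission
  imports Defs "HOL-Real_Asymp.Real_Asymp"
begin

lemma sq_bound:
  fixes s t a :: real
  assumes "s > 0" "t > 0" "0 \<le> a" "a \<le> 1 + 4 * s / t + 4 * s^2 / t^2"
  shows "sqrt a \<le> 1 + 2 * s / t"
proof -
  have "(1 + 2 * s / t)^2 = 1 + 4 * s / t + 4 * s^2 / t^2"
    using assms by (simp add: power2_eq_square field_simps)
  then have "a \<le> (1 + 2 * s / t)^2" using assms by simp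
  moreover have "0 \<le> 1 + 2 * s / t" using assms by simp
  ultimately show ?thesis
    by (metis real_sqrt_le_mono real_sqrt_abs abs_of_nonneg)
qed

lemma case1:
  fixes s t r :: real
  assumes "s > 0" "t > 0" "r > 0" "r < sqrt (t^2 + s^2) - s"
  shows "sqrt (1 + 4 * s^2 / (t^2 - r^2)) \<le> 1 + 2 * s / t"
proof -
  have "r + s < sqrt (t^2 + s^2)" using assms by simp
  then have "(r + s)^2 < t^2 + s^2"
  proof -
    have "(r + s)^2 < (sqrt (t^2 + s^2))^2" using assms \<open>r + s < sqrt (t^2 + s^2)\<close>
      by (intro power_strict_mono) auto
    then show ?thesis by simp
  qed
  then have h: "r^2 + 2 * r * s < t^2" by (simp add: power2_eq_square algebra_simps)
  have "r^2 < t^2" using h assms by (smt (verit) mult_pos_pos)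
  then have rt: "r < t" using assms by (simp add: power2_less_imp_less)
  have d: "t^2 - r^2 > 2 * r * s" using h by simp
  have dp: "t^2 - r^2 > 0" using d assms by (smt (verit) mult_pos_pos)
  have key: "r^2 * s \<le> t * (t^2 - r^2)"
  proof -
    have "r^2 * s = r * (r * s)" by (simp add: power2_eq_square)
    also have "\<dots> \<le> (2 * t) * (r * s)" using rt assms by (intro mult_right_mono) auto
    also have "\<dots> = t * (2 * r * s)" by simp
    also have "\<dots> \<le> t * (t^2 - r^2)" using d assms by (intro mult_left_mono) auto
    finally show ?thesis .
  qed
  have "4 * s^2 / (t^2 - r^2) \<le> 4 * s / t + 4 * s^2 / t^2"
  proof -
    have "4 * s^2 * t^2 \<le> (4 * s * t + 4 * s^2) * (t^2 - r^2)"
    proof -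
      have "(4 * s * t + 4 * s^2) * (t^2 - r^2) - 4 * s^2 * t^2 = 4 * s * (t * (t^2 - r^2) - r^2 * s)"
        by (simp add: power2_eq_square algebra_simps)
      also have "\<dots> \<ge> 0" using key assms by simp
      finally show ?thesis by simp
    qed
    then show ?thesis using dp assms
      by (simp add: field_simps power2_eq_square)
  qed
  moreover have "0 \<le> 1 + 4 * s^2 / (t^2 - r^2)" using dp by simp
  ultimately show ?thesis using sq_bound[OF assms(1,2)] by simp
qed

lemma upper:
  fixes s t :: real and \<xi> :: "real^3"
  assumes "s > 0" "t > 0"
  shows "mu_conv s \<xi> t \<le> 2 * pi * (1 + 2 * s / t)"
proof (cases "\<xi> = 0")
  case True
  have "sqrt (1 + 4 * s\<^sup>2 / t\<^sup>2) \<le> 1 + 2 * s / t"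
    using assms by (intro sq_bound) auto
  then show ?thesis using True by (simp add: mu_conv_def)
next
  case False
  define r where "r = norm \<xi>"
  have r0: "r > 0" using False r_def by simp
  define A where "A = sqrt (t\<^sup>2 + s\<^sup>2) - s"
  define B where "B = sqrt (t\<^sup>2 + 4 * s\<^sup>2)"
  define C where "C = sqrt (t\<^sup>2 + s\<^sup>2) + s"
  have AB: "A < B"
  proof -
    have "sqrt (t\<^sup>2 + s\<^sup>2) \<le> B" unfolding B_def using assms by simp
    then show ?thesis unfolding A_def using assms by simp
  qed
  have Bt: "t < B" unfolding B_def using assms
    by (intro real_less_rsqrt) simp
  have pg: "pi > 0" by simp
  have val: "mu_conv s \<xi> t = (2 * pi / r) *
       ((if r < A then r * sqrt (1 + 4 * s\<^sup>2 / (t\<^sup>2 - r\<^sup>2)) else 0)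
      + (if A \<le> r \<and> r \<le> B then t else 0)
      + (if B < r \<and> r \<le> C then t - r * sqrt (1 + 4 * s\<^sup>2 / (t\<^sup>2 - r\<^sup>2)) else 0))"
    using False unfolding mu_conv_def r_def A_def B_def C_def by simp
  consider "r < A" | "A \<le> r \<and> r \<le> B" | "B < r \<and> r \<le> C" | "\<not> r < A \<and> \<not> (A \<le> r \<and> r \<le> B) \<and> \<not> (B < r \<and> r \<le> C)"
    by blast
  then show ?thesis
  proof cases
    case 1
    then have v: "mu_conv s \<xi> t = 2 * pi * sqrt (1 + 4 * s\<^sup>2 / (t\<^sup>2 - r\<^sup>2))"
      using val AB r0 by auto
    have "sqrt (1 + 4 * s\<^sup>2 / (t\<^sup>2 - r\<^sup>2)) \<le> 1 + 2 * s / t"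
      using case1[OF assms r0] 1 unfolding A_def by simp
    then show ?thesis using v pg by simp
  next
    case 2
    then have v: "mu_conv s \<xi> t = 2 * pi * (t / r)"
      using val AB r0 by auto
    have "t / r \<le> 1 + 2 * s / t"
    proof (cases "t \<le> r")
      case True
      then have "t / r \<le> 1" using r0 by simp
      then show ?thesis using assms by (smt (verit) divide_nonneg_pos)
    next
      case False
      have "sqrt (t\<^sup>2 + s\<^sup>2) \<le> r + s" using 2 unfolding A_def by simp
      then have "(sqrt (t\<^sup>2 + s\<^sup>2))^2 \<le> (r + s)^2" using r0 assms
        by (intro power_mono) auto
      then have "t\<^sup>2 + s\<^sup>2 \<le> (r + s)^2" by simp
      then have h: "t\<^sup>2 \<le> r^2 + 2 * r * s" by (simp add: power2_eq_square algebra_simps)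
      have "r^2 \<le> r * t" using False r0 by (simp add: power2_eq_square)
      then have "t * t \<le> r * (t + 2 * s)" using h by (simp add: power2_eq_square algebra_simps)
      then show ?thesis using r0 assms by (simp add: field_simps)
    qed
    then have "2 * pi * (t / r) \<le> 2 * pi * (1 + 2 * s / t)" using pg by (intro mult_left_mono) auto
    then show ?thesis using v by simp
  next
    case 3
    then have v: "mu_conv s \<xi> t = (2 * pi / r) * (t - r * sqrt (1 + 4 * s\<^sup>2 / (t\<^sup>2 - r\<^sup>2)))"
      using val AB r0 by auto
    have rB: "B < r" using 3 by simp
    have "B^2 < r^2" using rB Bt assms by (intro power_strict_mono) auto
    then have "t\<^sup>2 + 4 * s\<^sup>2 < r^2" unfolding B_def by simp
    then have neg: "t\<^sup>2 - r\<^sup>2 < 0" "t\<^sup>2 - r\<^sup>2 + 4 * s\<^sup>2 < 0" using assms by (auto, smt (verit) zero_le_power2)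
    have "1 + 4 * s\<^sup>2 / (t\<^sup>2 - r\<^sup>2) = (t\<^sup>2 - r\<^sup>2 + 4 * s\<^sup>2) / (t\<^sup>2 - r\<^sup>2)"
      using neg by (simp add: field_simps)
    also have "\<dots> \<ge> 0" using neg by (simp add: divide_nonpos_neg)
    finally have "sqrt (1 + 4 * s\<^sup>2 / (t\<^sup>2 - r\<^sup>2)) \<ge> 0" by simp
    then have "t - r * sqrt (1 + 4 * s\<^sup>2 / (t\<^sup>2 - r\<^sup>2)) \<le> t" using r0 by simp
    then have "(2 * pi / r) * (t - r * sqrt (1 + 4 * s\<^sup>2 / (t\<^sup>2 - r\<^sup>2))) \<le> (2 * pi / r) * t"
      using r0 pg by (intro mult_left_mono) auto
    also have "\<dots> = 2 * pi * (t / r)" by simp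
    also have "\<dots> \<le> 2 * pi * 1" using Bt rB r0 pg by (intro mult_left_mono) auto
    also have "\<dots> \<le> 2 * pi * (1 + 2 * s / t)" using assms pg by (intro mult_left_mono) auto
    finally show ?thesis using v by simp
  next
    case 4
    then have "mu_conv s \<xi> t = 0" using val by (simp only: if_False 4) simp
    then show ?thesis using assms pg by (simp add: add_pos_pos)
  qed
qed

theorem lemma3p2:
  fixes s :: real
  assumes "s > 0"
  shows "(\<forall>\<tau>::real. \<tau> > 0 \<longrightarrow>
            2 * pi * sqrt (1 + 4 * s\<^sup>2 / \<tau>\<^sup>2) \<le> (SUP \<xi>::real^3. mu_conv s \<xi> \<tau>) \<and>
            (SUP \<xi>::real^3. mu_conv s \<xi> \<tau>) \<le> 2 * pi * (1 + 2 * s / \<tau>))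
         \<and> ((\<lambda>\<tau>. SUP \<xi>::real^3. mu_conv s \<xi> \<tau>) \<longlongrightarrow> 2 * pi) at_top"
proof -
  have B: "2 * pi * sqrt (1 + 4 * s\<^sup>2 / t\<^sup>2) \<le> (SUP \<xi>::real^3. mu_conv s \<xi> t) \<and>
            (SUP \<xi>::real^3. mu_conv s \<xi> t) \<le> 2 * pi * (1 + 2 * s / t)" if t: "t > 0" for t
  proof
    have bdd: "bdd_above (range (\<lambda>\<xi>::real^3. mu_conv s \<xi> t))"
      using upper[OF assms t] by (intro bdd_aboveI2) auto
    have "mu_conv s 0 t \<le> (SUP \<xi>::real^3. mu_conv s \<xi> t)"
      by (rule cSUP_upper[OF _ bdd]) auto
    then show "2 * pi * sqrt (1 + 4 * s\<^sup>2 / t\<^sup>2) \<le> (SUP \<xi>::real^3. mu_conv s \<xi> t)"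
      by (simp add: mu_conv_def)
    show "(SUP \<xi>::real^3. mu_conv s \<xi> t) \<le> 2 * pi * (1 + 2 * s / t)"
      using upper[OF assms t] by (intro cSUP_least) auto
  qed
  have L1: "((\<lambda>t::real. 2 * pi * sqrt (1 + 4 * s\<^sup>2 / t\<^sup>2)) \<longlongrightarrow> 2 * pi) at_top"
    by real_asymp
  have L2: "((\<lambda>t::real. 2 * pi * (1 + 2 * s / t)) \<longlongrightarrow> 2 * pi) at_top"
    by real_asymp
  have ev: "eventually (\<lambda>t::real. t > 0) at_top" by (rule eventually_gt_at_top)
  have "((\<lambda>\<tau>. SUP \<xi>::real^3. mu_conv s \<xi> \<tau>) \<longlongrightarrow> 2 * pi) at_top"
  proof (rule tendsto_sandwich[OF _ _ L1 L2])
    show "eventually (\<lambda>t. 2 * pi * sqrt (1 + 4 * s\<^sup>2 / t\<^sup>2) \<le> (SUP \<xi>::real^3. mu_conv s \<xi> t)) at_top"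
      using ev by eventually_elim (use B in blast)
    show "eventually (\<lambda>t. (SUP \<xi>::real^3. mu_conv s \<xi> t) \<le> 2 * pi * (1 + 2 * s / t)) at_top"
      using ev by eventually_elim (use B in blast)
  qed
  with B show ?thesis by blast
qed

end
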